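(* For every integer $n\geq 7$ there exists a tree $T$ on $n$ vertices that is neutral, i.e., whose assortativity coefficient satisfies $r(T)=0$.
   Context: All graphs are finite, simple and connected. For a graph $G=(V,E)$ with $m=|E|\geq 1$ edges, let $d_u$ denote the degree of vertex $u$ and write sums over edges $e_{uv}\in E$ (each edge counted once). The assortativity coefficient of $G$ is $$r(G)=\frac{m^{-1}\sum_{e_{uv}\in E} d_{u}d_{v}-\Big[m^{-1}\sum_{e_{uv}\in E} \tfrac{1}{2}(d_{u}+d_{v})\Big]^{2}}{m^{-1}\sum_{e_{uv}\in E} \tfrac{1}{2}(d^{2}_{u}+d^{2}_{v})-\Big[m^{-1}\sum_{e_{uv}\in E} \tfrac{1}{2}(d_{u}+d_{v})\Big]^{2}},$$ defined whenever the denominator is nonzero. $G$ is called neutral if $r(G)$ is defined and $r(G)=0$. *)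

theory Defs
  imports Main "HOL-Library.Multiset" Complex_Main
begin

definition simple_graph :: "'a set \<Rightarrow> 'a set set \<Rightarrow> bool" where
  "simple_graph V E \<longleftrightarrow> finite V \<and> (\<forall>e\<in>E. e \<subseteq> V \<and> card e = 2)"

definition adj :: "'a set set \<Rightarrow> 'a \<Rightarrow> 'a \<Rightarrow> bool" where
  "adj E u v \<longleftrightarrow> {u, v} \<in> E"

definition connected_graph :: "'a set \<Rightarrow> 'a set set \<Rightarrow> bool" where
  "connected_graph V E \<longleftrightarrow> V \<noteq> {} \<and>
     (\<forall>u\<in>V. \<forall>v\<in>V. (adj E)\<^sup>*\<^sup>* u v)"

definition is_tree :: "'a set \<Rightarrow> 'a set set \<Rightarrow> bool" where
  "is_tree V E \<longleftrightarrow> simple_graph V E \<and> connected_graph V E \<and>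
     (\<forall>e\<in>E. \<not> connected_graph V (E - {e}))"

definition degree :: "'a set set \<Rightarrow> 'a \<Rightarrow> nat" where
  "degree E u = card {e\<in>E. u \<in> e}"

text \<open>Assortativity coefficient (sums over edges, each edge once; for an edge
  e = {u,v}: d_u d_v = prod of degrees over e, (d_u+d_v)/2 = half the sum, etc.).\<close>

definition assort_num :: "'a set set \<Rightarrow> real" where
  "assort_num E = (let m = real (card E);
      M1 = (\<Sum>e\<in>E. \<Prod>u\<in>e. real (degree E u)) / m;
      M2 = (\<Sum>e\<in>E. (\<Sum>u\<in>e. real (degree E u)) / 2) / m
    in M1 - M2 ^ 2)"

definition assort_den :: "'a set set \<Rightarrow> real" where
  "assort_den E = (let m = real (card E);
      M3 = (\<Sum>e\<in>E. (\<Sum>u\<in>e. real (degree E u) ^ 2) / 2) / m;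
      M2 = (\<Sum>e\<in>E. (\<Sum>u\<in>e. real (degree E u)) / 2) / m
    in M3 - M2 ^ 2)"

definition assortativity :: "'a set set \<Rightarrow> real" where
  "assortativity E = assort_num E / assort_den E"

text \<open>Neutral: r(G) is defined (m \<ge> 1 and denominator nonzero) and equals 0.\<close>
definition neutral :: "'a set set \<Rightarrow> bool" where
  "neutral E \<longleftrightarrow> card E \<ge> 1 \<and> assort_den E \<noteq> 0 \<and> assortativity E = 0"

end

theory Submission
  imports Defs
begin

definition TE :: "nat \<Rightarrow> nat set set" where
  "TE k = (\<lambda>i. {i, Suc i}) ` {..<k+4} \<union> {{2,k+5},{k+5,k+6}}"

lemma inj_edge: "inj_on (\<lambda>i::nat. {i, Suc i}) A"
  by (auto simp: inj_on_def doubleton_eq_iff)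

lemma TE_sum:
  fixes F :: "nat set \<Rightarrow> 'b::comm_monoid_add"
  shows "(\<Sum>e\<in>TE k. F e) = (\<Sum>i<k+4. F {i, Suc i}) + F {2,k+5} + F {k+5,k+6}"
proof -
  have d: "(\<lambda>i. {i, Suc i}) ` {..<k+4} \<inter> {{2,k+5},{k+5,k+6}} = {}"
    by (auto simp: doubleton_eq_iff)
  have ne: "{2::nat,k+5} \<noteq> {k+5,k+6}" by (auto simp: doubleton_eq_iff)
  have "(\<Sum>e\<in>TE k. F e) = (\<Sum>e\<in>(\<lambda>i. {i, Suc i}) ` {..<k+4}. F e) + (\<Sum>e\<in>{{2,k+5},{k+5,k+6}}. F e)"
    unfolding TE_def by (rule sum.union_disjoint) (use d in auto)
  also have "(\<Sum>e\<in>(\<lambda>i. {i, Suc i}) ` {..<k+4}. F e) = (\<Sum>i<k+4. F {i, Suc i})"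
    by (subst sum.reindex) (auto simp: inj_edge)
  also have "(\<Sum>e\<in>{{2,k+5},{k+5,k+6}}. F e) = F {2,k+5} + F {k+5,k+6}"
    using ne by simp
  finally show ?thesis by (simp add: add.assoc)
qed

definition D :: "nat \<Rightarrow> nat \<Rightarrow> nat" where
  "D k v = (if v < k+4 then 1 else 0) + (if 1 \<le> v \<and> v \<le> k+4 then 1 else 0)
     + (if v = 2 \<or> v = k+5 then 1 else 0) + (if v = k+5 \<or> v = k+6 then 1 else 0)"

lemma finite_TE: "finite (TE k)"
  unfolding TE_def by simp

lemma path_count: "(\<Sum>i<k+4. (if v \<in> {i, Suc i} then 1 else 0)) =
   (if v < k+4 then 1 else 0) + (if 1 \<le> v \<and> v \<le> k+4 then 1 else (0::nat))"
proof -
  have "(\<Sum>i<k+4. (if v \<in> {i, Suc i} then 1 else 0)) =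
     (\<Sum>i<k+4. (if v = i then 1 else 0) + (if v = Suc i then 1 else (0::nat)))"
    by (rule sum.cong) auto
  also have "\<dots> = (\<Sum>i<k+4. (if v = i then 1 else 0)) + (\<Sum>i<k+4. (if v = Suc i then 1 else (0::nat)))"
    by (rule sum.distrib)
  also have "(\<Sum>i<k+4. (if v = i then 1 else (0::nat))) = (if v < k+4 then 1 else 0)"
    by (simp add: sum.delta)
  also have "(\<Sum>i<k+4. (if v = Suc i then 1 else (0::nat))) = (if 1 \<le> v \<and> v \<le> k+4 then 1 else 0)"
  proof (cases v)
    case 0 then show ?thesis by simp
  next
    case (Suc w) then show ?thesis by (simp add: sum.delta)
  qed
  finally show ?thesis .
qed

lemma degree_TE: "degree (TE k) v = D k v"
proof -
  have "degree (TE k) v = card {e\<in>TE k. v \<in> e}" by (simp add: degree_def)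
  also have "\<dots> = (\<Sum>e\<in>{e\<in>TE k. v \<in> e}. 1)" by (rule card_eq_sum)
  also have "\<dots> = (\<Sum>e\<in>TE k. if v \<in> e then 1 else 0)"
    by (rule sum.inter_filter) (rule finite_TE)
  also have "\<dots> = (\<Sum>i<k+4. (if v \<in> {i, Suc i} then 1 else 0))
      + (if v \<in> {2,k+5} then 1 else 0) + (if v \<in> {k+5,k+6} then 1 else 0)"
    by (rule TE_sum)
  also have "\<dots> = D k v"
    unfolding path_count D_def by simp
  finally show ?thesis .
qed

lemma split4:
  fixes f :: "nat \<Rightarrow> real"
  shows "(\<Sum>i<k+4. f i) = f 0 + f 1 + f 2 + (\<Sum>i<k. f (Suc (Suc (Suc i)))) + f (k+3)"
proof -
  have e: "k + 4 = Suc (Suc (Suc (Suc k)))" by simp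
  show ?thesis
    unfolding e
    apply (subst sum.lessThan_Suc)
    apply (subst sum.lessThan_Suc_shift)+
    apply (simp add: numeral_3_eq_3 numeral_2_eq_2)
    done
qed

lemma D_sum:
  fixes g :: "nat \<Rightarrow> nat \<Rightarrow> real"
  shows "(\<Sum>i<k+4. g (D k i) (D k (Suc i))) = g 1 2 + g 2 3 + g 3 2 + real k * g 2 2 + g 2 1"
proof -
  have m: "(\<Sum>i<k. g (D k (Suc (Suc (Suc i)))) (D k (Suc (Suc (Suc (Suc i)))))) = real k * g 2 2"
  proof -
    have "(\<Sum>i<k. g (D k (Suc (Suc (Suc i)))) (D k (Suc (Suc (Suc (Suc i)))))) = (\<Sum>i<k. g 2 2)"
      by (rule sum.cong) (auto simp: D_def numeral_2_eq_2)
    then show ?thesis by simp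
  qed
  have a: "D k 0 = 1" "D k 1 = 2" "D k 2 = 3" "D k 3 = 2" "D k (Suc (k+3)) = 1" "D k (k+3) = 2"
    by (auto simp: D_def)
  show ?thesis
    unfolding split4[of _ k] m using a by (simp add: numeral_3_eq_3 numeral_2_eq_2)
qed

lemma adj_sym: "adj E x y = adj E y x"
  by (simp add: adj_def insert_commute)

lemma rtc_sym: "(adj E)\<^sup>*\<^sup>* x y \<Longrightarrow> (adj E)\<^sup>*\<^sup>* y x"
proof (induction rule: rtranclp.induct)
  case (rtrancl_refl a) then show ?case by simp
next
  case (rtrancl_into_rtrancl a b c)
  then show ?case using adj_sym converse_rtranclp_into_rtranclp by metis
qed

lemma adj_TE: "adj (TE k) x y \<longleftrightarrow>
   (\<exists>j<k+4. {x,y} = {j, Suc j}) \<or> {x,y} = {2,k+5} \<or> {x,y} = {k+5,k+6}"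
  unfolding adj_def TE_def by auto

lemma reach_path: "v \<le> k+4 \<Longrightarrow> (adj (TE k))\<^sup>*\<^sup>* 0 v"
proof (induction v)
  case 0 then show ?case by simp
next
  case (Suc v)
  have "adj (TE k) v (Suc v)" unfolding adj_TE using Suc.prems by (intro disjI1 exI[of _ v]) simp
  with Suc show ?case by (meson Suc_leD rtranclp.rtrancl_into_rtrancl)
qed

lemma reach_all: "v < k+7 \<Longrightarrow> (adj (TE k))\<^sup>*\<^sup>* 0 v"
proof -
  assume v: "v < k+7"
  have r2: "(adj (TE k))\<^sup>*\<^sup>* 0 2" by (rule reach_path) simp
  have a5: "adj (TE k) 2 (k+5)" unfolding adj_TE by auto
  have a6: "adj (TE k) (k+5) (k+6)" unfolding adj_TE by auto
  have r5: "(adj (TE k))\<^sup>*\<^sup>* 0 (k+5)" using r2 a5 by (meson rtranclp.rtrancl_into_rtrancl)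
  have r6: "(adj (TE k))\<^sup>*\<^sup>* 0 (k+6)" using r5 a6 by (meson rtranclp.rtrancl_into_rtrancl)
  show ?thesis
  proof (cases "v \<le> k+4")
    case True then show ?thesis by (rule reach_path)
  next
    case False
    then have "v = k+5 \<or> v = k+6" using v by arith
    then show ?thesis using r5 r6 by auto
  qed
qed

lemma conn_TE: "connected_graph {0..<k+7} (TE k)"
  unfolding connected_graph_def
proof (intro conjI ballI)
  show "{0..<k+7} \<noteq> {}" by auto
next
  fix u v assume "u \<in> {0..<k+7}" "v \<in> {0..<k+7}"
  then have "(adj (TE k))\<^sup>*\<^sup>* 0 u" "(adj (TE k))\<^sup>*\<^sup>* 0 v" using reach_all by auto
  then show "(adj (TE k))\<^sup>*\<^sup>* u v" using rtc_sym by (meson rtranclp_trans)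
qed

lemma cut:
  assumes "u \<in> V" "v \<in> V" "u \<in> S" "v \<notin> S" "\<And>x y. adj E x y \<Longrightarrow> x \<in> S \<Longrightarrow> y \<in> S"
  shows "\<not> connected_graph V E"
proof
  assume "connected_graph V E"
  then have r: "(adj E)\<^sup>*\<^sup>* u v" using assms unfolding connected_graph_def by auto
  have "\<And>a b. (adj E)\<^sup>*\<^sup>* a b \<Longrightarrow> a \<in> S \<Longrightarrow> b \<in> S"
  proof -
    fix a b assume "(adj E)\<^sup>*\<^sup>* a b" "a \<in> S"
    then show "b \<in> S" by (induction rule: rtranclp.induct) (auto intro: assms(5))
  qed
  from this[OF r assms(3)] assms(4) show False by simp
qed

lemma adj_minus: "adj (E - {e}) x y \<longleftrightarrow> adj E x y \<and> {x,y} \<noteq> e"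
  by (auto simp: adj_def)

lemma TE_mem:
  assumes "{x,y} \<in> TE k"
  shows "(\<exists>j<k+4. {x,y} = {j, Suc j} \<and> ((x = j \<and> y = Suc j) \<or> (x = Suc j \<and> y = j))) \<or>
     ({x,y} = {2,k+5} \<and> ((x = 2 \<and> y = k+5) \<or> (x = k+5 \<and> y = 2))) \<or>
     ({x,y} = {k+5,k+6} \<and> ((x = k+5 \<and> y = k+6) \<or> (x = k+6 \<and> y = k+5)))"
proof -
  from assms consider (p) j where "j < k+4" "{x,y} = {j, Suc j}" | (a) "{x,y} = {2,k+5}" | (b) "{x,y} = {k+5,k+6}"
    unfolding TE_def by blast
  then show ?thesis
  proof cases
    case p
    then have "(x = j \<and> y = Suc j) \<or> (x = Suc j \<and> y = j)" by (simp only: doubleton_eq_iff)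
    with p show ?thesis by blast
  next
    case a
    then have "(x = 2 \<and> y = k+5) \<or> (x = k+5 \<and> y = 2)" by (simp only: doubleton_eq_iff)
    with a show ?thesis by blast
  next
    case b
    then have "(x = k+5 \<and> y = k+6) \<or> (x = k+6 \<and> y = k+5)" by (simp only: doubleton_eq_iff)
    with b show ?thesis by blast
  qed
qed

lemma adj_TE_cases:
  assumes "adj (TE k - {{i, Suc i}}) x y"
  shows "(\<exists>j<k+4. j \<noteq> i \<and> ((x = j \<and> y = Suc j) \<or> (x = Suc j \<and> y = j))) \<or>
     (x = 2 \<and> y = k+5) \<or> (x = k+5 \<and> y = 2) \<or> (x = k+5 \<and> y = k+6) \<or> (x = k+6 \<and> y = k+5)"
proof -
  have m: "{x,y} \<in> TE k" and ne: "{x,y} \<noteq> {i, Suc i}" using assms by (auto simp: adj_def)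
  from TE_mem[OF m] show ?thesis
  proof (elim disjE exE conjE)
    fix j assume "j < k+4" "{x, y} = {j, Suc j}" "x = j" "y = Suc j"
    then show ?thesis using ne by blast
  next
    fix j assume "j < k+4" "{x, y} = {j, Suc j}" "x = Suc j" "y = j"
    then show ?thesis using ne by blast
  qed blast+
qed

lemma adj_TE_cases2:
  assumes "adj (TE k - {e}) x y" "e = {2,k+5} \<or> e = {k+5,k+6}"
  shows "(\<exists>j<k+4. ((x = j \<and> y = Suc j) \<or> (x = Suc j \<and> y = j))) \<or>
     (e \<noteq> {2,k+5} \<and> ((x = 2 \<and> y = k+5) \<or> (x = k+5 \<and> y = 2))) \<or>
     (e \<noteq> {k+5,k+6} \<and> ((x = k+5 \<and> y = k+6) \<or> (x = k+6 \<and> y = k+5)))"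
proof -
  have m: "{x,y} \<in> TE k" and ne: "{x,y} \<noteq> e" using assms by (auto simp: adj_def)
  from TE_mem[OF m] ne show ?thesis by blast
qed

lemma cut_TE: "e \<in> TE k \<Longrightarrow> \<not> connected_graph {0..<k+7} (TE k - {e})"
proof -
  assume "e \<in> TE k"
  then consider (p) i where "i < k+4" "e = {i, Suc i}" | (a) "e = {2,k+5}" | (b) "e = {k+5,k+6}"
    unfolding TE_def by auto
  then show ?thesis
  proof cases
    case p
    show ?thesis
    proof (cases "i < 2")
      case True
      show ?thesis
      proof (rule cut[of i _ "Suc i" "{..i}"])
        fix x y assume "adj (TE k - {e}) x y" "x \<in> {..i}"
        then have "x \<le> i" and c: "(\<exists>j<k+4. j \<noteq> i \<and> ((x = j \<and> y = Suc j) \<or> (x = Suc j \<and> y = j))) \<or>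
     (x = 2 \<and> y = k+5) \<or> (x = k+5 \<and> y = 2) \<or> (x = k+5 \<and> y = k+6) \<or> (x = k+6 \<and> y = k+5)"
          using p adj_TE_cases[of k i x y] by auto
        from c show "y \<in> {..i}"
        proof (elim disjE exE conjE)
          fix j assume "j \<noteq> i" "x = j" "y = Suc j" then show ?thesis using \<open>x \<le> i\<close> by simp
        next
          fix j assume "j \<noteq> i" "x = Suc j" "y = j" then show ?thesis using \<open>x \<le> i\<close> by simp
        qed (use \<open>x \<le> i\<close> True in simp_all)
      qed (use p True in auto)
    next
      case False
      show ?thesis
      proof (rule cut[of "Suc i" _ i "{Suc i..k+4}"])
        fix x y assume "adj (TE k - {e}) x y" "x \<in> {Suc i..k+4}"
        then have "Suc i \<le> x" "x \<le> k+4" and c: "(\<exists>j<k+4. j \<noteq> i \<and> ((x = j \<and> y = Suc j) \<or> (x = Suc j \<and> y = j))) \<or>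
     (x = 2 \<and> y = k+5) \<or> (x = k+5 \<and> y = 2) \<or> (x = k+5 \<and> y = k+6) \<or> (x = k+6 \<and> y = k+5)"
          using p adj_TE_cases[of k i x y] by auto
        from c show "y \<in> {Suc i..k+4}"
        proof (elim disjE exE conjE)
          fix j assume "j < k+4" "j \<noteq> i" "x = j" "y = Suc j" then show ?thesis using \<open>Suc i \<le> x\<close> by simp
        next
          fix j assume "j < k+4" "j \<noteq> i" "x = Suc j" "y = j" then show ?thesis using \<open>Suc i \<le> x\<close> by simp
        qed (use \<open>Suc i \<le> x\<close> \<open>x \<le> k+4\<close> False in simp_all)
      qed (use p False in auto)
    qed
  next
    case a
    show ?thesis
    proof (rule cut[of "k+5" _ 2 "{k+5,k+6}"])
      fix x y assume "adj (TE k - {e}) x y" "x \<in> {k+5,k+6}"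
      then show "y \<in> {k+5,k+6}" using a adj_TE_cases2[of k e x y] by auto
    qed (use a in auto)
  next
    case b
    show ?thesis
    proof (rule cut[of "k+6" _ "k+5" "{k+6}"])
      fix x y assume "adj (TE k - {e}) x y" "x \<in> {k+6}"
      then show "y \<in> {k+6}" using b adj_TE_cases2[of k e x y] by auto
    qed (use b in auto)
  qed
qed

lemma tree_TE: "is_tree {0..<k+7} (TE k)"
  unfolding is_tree_def
proof (intro conjI ballI)
  show "simple_graph {0..<k+7} (TE k)"
    unfolding simple_graph_def TE_def by auto
  show "connected_graph {0..<k+7} (TE k)" by (rule conn_TE)
  fix e assume "e \<in> TE k" then show "\<not> connected_graph {0..<k+7} (TE k - {e})" by (rule cut_TE)
qed

lemma card_TE: "card (TE k) = k + 6"
proof -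
  have "card (TE k) = (\<Sum>e\<in>TE k. (1::nat))" by (rule card_eq_sum)
  also have "\<dots> = k + 6" by (subst TE_sum) simp
  finally show ?thesis .
qed

lemma prod2: "(\<Prod>u\<in>{i, Suc i}. f u) = f i * (f (Suc i) :: real)" by simp
lemma sum2: "(\<Sum>u\<in>{i, Suc i}. f u) = f i + (f (Suc i) :: real)" by simp

lemma Dvals: "D k 2 = 3" "D k (k+5) = 2" "D k (k+6) = 1"
  by (simp_all add: D_def)

lemma S1: "(\<Sum>e\<in>TE k. \<Prod>u\<in>e. real (degree (TE k) u)) = 4 * real k + 24"
proof -
  have "(\<Sum>e\<in>TE k. \<Prod>u\<in>e. real (degree (TE k) u)) =
     (\<Sum>i<k+4. real (D k i) * real (D k (Suc i))) + real (D k 2) * real (D k (k+5))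
       + real (D k (k+5)) * real (D k (k+6))"
    by (simp only: TE_sum degree_TE prod2) simp
  also have "\<dots> = 4 * real k + 24"
    unfolding D_sum[of "\<lambda>a b. real a * real b" k] Dvals by simp
  finally show ?thesis .
qed

lemma S2: "(\<Sum>e\<in>TE k. (\<Sum>u\<in>e. real (degree (TE k) u)) / 2) = 2 * real k + 12"
proof -
  have "(\<Sum>e\<in>TE k. (\<Sum>u\<in>e. real (degree (TE k) u)) / 2) =
     (\<Sum>i<k+4. (real (D k i) + real (D k (Suc i))) / 2) + (real (D k 2) + real (D k (k+5))) / 2
       + (real (D k (k+5)) + real (D k (k+6))) / 2"
    by (simp only: TE_sum degree_TE sum2) simp
  also have "\<dots> = 2 * real k + 12"
    unfolding D_sum[of "\<lambda>a b. (real a + real b) / 2" k] Dvals by simp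
  finally show ?thesis .
qed

lemma S3: "(\<Sum>e\<in>TE k. (\<Sum>u\<in>e. real (degree (TE k) u) ^ 2) / 2) = 4 * real k + 27"
proof -
  have "(\<Sum>e\<in>TE k. (\<Sum>u\<in>e. real (degree (TE k) u) ^ 2) / 2) =
     (\<Sum>i<k+4. (real (D k i) ^ 2 + real (D k (Suc i)) ^ 2) / 2) + (real (D k 2) ^ 2 + real (D k (k+5)) ^ 2) / 2
       + (real (D k (k+5)) ^ 2 + real (D k (k+6)) ^ 2) / 2"
    by (simp only: TE_sum degree_TE sum2) simp
  also have "\<dots> = 4 * real k + 27"
    unfolding D_sum[of "\<lambda>a b. (real a ^ 2 + real b ^ 2) / 2" k] Dvals by simp
  finally show ?thesis .
qed

lemma neutral_TE: "neutral (TE k)"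
proof -
  have m: "real (card (TE k)) = real k + 6" by (simp add: card_TE)
  have pos: "real k + 6 \<noteq> 0" by linarith
  have M2: "(2 * real k + 12) / (real k + 6) = 2" using pos by (simp add: field_simps)
  have M1: "(4 * real k + 24) / (real k + 6) = 4" using pos by (simp add: field_simps)
  have M3: "(4 * real k + 27) / (real k + 6) - 2 ^ 2 = 3 / (real k + 6)"
    using pos by (simp add: field_simps)
  have num: "assort_num (TE k) = 0"
    unfolding assort_num_def Let_def m S1 S2 M1 M2 by simp
  have den: "assort_den (TE k) = 3 / (real k + 6)"
    unfolding assort_den_def Let_def m S3 S2 M2 M3 by (rule refl)
  have "3 / (real k + 6) \<noteq> 0" using pos by simp
  then show ?thesis unfolding neutral_def assortativity_def num den card_TE by simp
qed

theorem theorem2: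
  fixes n :: nat
  assumes "n \<ge> 7"
  shows "\<exists>E :: nat set set. is_tree {0..<n} E \<and> neutral E"
proof -
  obtain k where "n = k + 7" using assms by (metis add.commute le_add_diff_inverse)
  then show ?thesis using tree_TE neutral_TE by blast
qed

end
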